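(* Fix a target node $t$ whose incoming neighbors are partitioned into a primary set $\mathcal{S}^*$ with $|\mathcal{S}^*|=n^*$ and a secondary set $\mathcal{S}^c$ with $|\mathcal{S}^c|=m$. Let $E_{t,s}\in\mathbb{R}$ be (random) attention scores, write $E_1^*,\dots,E_{n^*}^*$ for the scores of the primary neighbors and $E_1,\dots,E_m$ for those of the secondary neighbors, and consider softmax attention $$\alpha_{t,s}=\frac{\exp(E_{t,s})}{\sum_{u\in\mathcal{S}^*\cup\mathcal{S}^c}\exp(E_{t,u})}.$$ Define the primary attention mass $$A^*(t):=\sum_{s\in\mathcal{S}^*}\alpha_{t,s}=\frac{X_{n^*}}{X_{n^*}+Y_m},\qquad X_{n^*}:=\sum_{i=1}^{n^*}\exp(E_i^* ),\quad Y_m:=\sum_{j=1}^{m}\exp(E_j).$$ Assume that, as $m\to\infty$ (where $n^*=n^*(m)$ is allowed to depend on $m$): (i) $\frac{1}{m}Y_m\to\mu$ almost surely for some $\mu\in(0,\infty)$; (ii) either (a) $\frac{1}{n^*}X_{n^*}\to\mu^*$ almost surely for some $\mu^*\in(0,\infty)$, or (b) $n^*$ is fixed (independent of $m$) and $X_{n^*}<\infty$ almost surely; (iii) in case (a), $\mu^*/\mu=O(1)$ independently of $m$. Then in case (a), $$A^*(t)=\frac{n^*\mu^*}{n^*\mu^*+m\mu}+o_{\mathrm{a.s.}}(1),$$ and in particular, if $m/n^*\to\infty$, then $A^*(t)\to 0$ almost surely and $A^*(t)=O(n^*/m)$. In case (b), $A^*(t)\to 0$ almost surely and $A^*(t)=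O(1/m)$.
   Context: $o_{\mathrm{a.s.}}(1)$ denotes a random quantity tending to $0$ almost surely as $m\to\infty$. All asymptotic statements are as $m\to\infty$. *)

theory Defs
  imports "HOL-Probability.Probability" "HOL-Library.Landau_Symbols"
begin

text \<open>Incoming neighbours of the target node t: primary ones Inl i (i < nstar),
  secondary ones Inr j (j < m).\<close>
definition neighbours :: "nat \<Rightarrow> nat \<Rightarrow> (nat + nat) set" where
  "neighbours nstar m = Inl ` {..<nstar} \<union> Inr ` {..<m}"

definition score :: "(nat \<Rightarrow> real) \<Rightarrow> (nat \<Rightarrow> real) \<Rightarrow> nat + nat \<Rightarrow> real" where
  "score Es E u = (case u of Inl i \<Rightarrow> Es i | Inr j \<Rightarrow> E j)"

definition attn :: "(nat \<Rightarrow> real) \<Rightarrow> (nat \<Rightarrow> real) \<Rightarrow> nat \<Rightarrow> nat \<Rightarrow> nat + nat \<Rightarrow> real" where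
  "attn Es E nstar m s =
     exp (score Es E s) / (\<Sum>u\<in>neighbours nstar m. exp (score Es E u))"

definition primary_mass :: "(nat \<Rightarrow> real) \<Rightarrow> (nat \<Rightarrow> real) \<Rightarrow> nat \<Rightarrow> nat \<Rightarrow> real" where
  "primary_mass Es E nstar m = (\<Sum>s\<in>Inl ` {..<nstar}. attn Es E nstar m s)"

definition Xsum :: "(nat \<Rightarrow> real) \<Rightarrow> nat \<Rightarrow> real" where
  "Xsum Es nstar = (\<Sum>i<nstar. exp (Es i))"

definition Ysum :: "(nat \<Rightarrow> real) \<Rightarrow> nat \<Rightarrow> real" where
  "Ysum E m = (\<Sum>j<m. exp (E j))"

end

theory Submission
  imports Defs
begin

lemma pm_eq: "primary_mass Es E n m = Xsum Es n / (Xsum Es n + Ysum E m)"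
proof -
  have "(\<Sum>u\<in>neighbours n m. exp (score Es E u)) = Xsum Es n + Ysum E m"
    unfolding neighbours_def Xsum_def Ysum_def
    by (subst sum.union_disjoint) (auto simp: sum.reindex score_def)
  moreover have "(\<Sum>s\<in>Inl ` {..<n}. exp (score Es E s)) = Xsum Es n"
    unfolding Xsum_def by (auto simp: sum.reindex score_def)
  ultimately show ?thesis
    unfolding primary_mass_def attn_def by (simp add: sum_divide_distrib[symmetric])
qed

lemma Xnn: "Xsum Es n \<ge> 0" unfolding Xsum_def by (auto intro: sum_nonneg)
lemma Ynn: "Ysum E n \<ge> 0" unfolding Ysum_def by (auto intro: sum_nonneg)

lemma key_ineq:
  fixes n m A B a b :: real
  assumes "n > 0" "m > 0" "A > a/2" "B > b/2" "a > 0" "b > 0"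
  shows "\<bar>n*A/(n*A + m*B) - n*a/(n*a+m*b)\<bar> \<le> \<bar>A*b - B*a\<bar> / (min (a/2) (b/2) * min a b)"
proof -
  define c1 where "c1 = min (a/2) (b/2)"
  define c2 where "c2 = min a b"
  have c1: "c1 > 0" "c2 > 0" using assms by (auto simp: c1_def c2_def)
  have D1: "n*A + m*B \<ge> (n+m)*c1"
  proof -
    have "n*A \<ge> n*c1" using assms by (intro mult_left_mono) (auto simp: c1_def)
    moreover have "m*B \<ge> m*c1" using assms by (intro mult_left_mono) (auto simp: c1_def)
    ultimately show ?thesis by (simp add: algebra_simps)
  qed
  have D2: "n*a + m*b \<ge> (n+m)*c2"
  proof -
    have "n*a \<ge> n*c2" using assms by (intro mult_left_mono) (auto simp: c2_def)
    moreover have "m*b \<ge> m*c2" using assms by (intro mult_left_mono) (auto simp: c2_def)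
    ultimately show ?thesis by (simp add: algebra_simps)
  qed
  have p1: "(n+m)*c1 > 0" "(n+m)*c2 > 0" using c1 assms by auto
  have eq: "n*A/(n*A + m*B) - n*a/(n*a+m*b) = (n*m)*(A*b - B*a) / ((n*A + m*B)*(n*a+m*b))"
    using D1 D2 p1 by (simp add: field_simps)
  have "\<bar>(n*m)*(A*b - B*a) / ((n*A + m*B)*(n*a+m*b))\<bar>
      = (n*m)*\<bar>A*b - B*a\<bar> / ((n*A + m*B)*(n*a+m*b))"
    using D1 D2 p1 assms by (simp add: abs_mult)
  also have "\<dots> \<le> ((n+m)*(n+m))*\<bar>A*b - B*a\<bar> / (((n+m)*c1)*((n+m)*c2))"
  proof (rule frac_le)
    show "0 \<le> (n + m) * (n + m) * \<bar>A * b - B * a\<bar>" by simp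
    show "(n*m)*\<bar>A*b - B*a\<bar> \<le> ((n+m)*(n+m))*\<bar>A*b - B*a\<bar>"
      using assms by (intro mult_right_mono) (auto simp: algebra_simps)
    show "0 < (n + m) * c1 * ((n + m) * c2)" using p1 by simp
    show "(n + m) * c1 * ((n + m) * c2) \<le> (n * A + m * B) * (n * a + m * b)"
      using D1 D2 p1 by (intro mult_mono) auto
  qed
  also have "\<dots> = \<bar>A*b - B*a\<bar> / (c1*c2)"
  proof -
    have "n+m \<noteq> 0" using assms by simp
    then show ?thesis by (simp add: mult_ac)
  qed
  finally show ?thesis using eq by (simp add: c1_def c2_def)
qed

lemma detA:
  fixes X Y :: "nat \<Rightarrow> real" and n :: "nat \<Rightarrow> nat"
  assumes XA: "(\<lambda>m. X m / real (n m)) \<longlonglongrightarrow> a" and YB: "(\<lambda>m. Y m / real m) \<longlonglongrightarrow> b"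
    and a: "a > 0" and b: "b > 0"
  shows "(\<lambda>m. X m/(X m+Y m) - real (n m)*a/(real (n m)*a + real m*b)) \<longlonglongrightarrow> 0"
proof (rule Lim_null_comparison)
  define C where "C = min (a/2) (b/2) * min a b"
  have ev1: "eventually (\<lambda>m. X m / real (n m) > a/2) sequentially"
    using XA a by (intro order_tendstoD) auto
  have ev2: "eventually (\<lambda>m. Y m / real m > b/2) sequentially"
    using YB b by (intro order_tendstoD) auto
  show "eventually (\<lambda>m. norm (X m/(X m+Y m) - real (n m)*a/(real (n m)*a + real m*b))
      \<le> \<bar>(X m / real (n m))*b - (Y m / real m)*a\<bar> / C) sequentially"
    using ev1 ev2
  proof eventually_elim
    case (elim m)
    have nz: "real (n m) > 0" using elim a by (cases "n m = 0") auto
    have mz: "real m > 0" using elim b by (cases "m = 0") auto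
    have e: "X m/(X m+Y m) = real (n m) * (X m / real (n m)) /
       (real (n m) * (X m / real (n m)) + real m * (Y m / real m))" using nz mz by simp
    show ?case unfolding real_norm_def e C_def
      using key_ineq[OF nz mz elim(1) elim(2) a b] by simp
  qed
  have "(\<lambda>m. \<bar>(X m / real (n m))*b - (Y m / real m)*a\<bar> / C) \<longlonglongrightarrow> \<bar>a*b - b*a\<bar> / C"
    using a b by (intro tendsto_intros XA YB) (auto simp: C_def)
  then show "(\<lambda>m. \<bar>(X m / real (n m))*b - (Y m / real m)*a\<bar> / C) \<longlonglongrightarrow> 0" by simp
qed

lemma detO:
  fixes X Y :: "nat \<Rightarrow> real"
  assumes YB: "(\<lambda>m. Y m / real m) \<longlonglongrightarrow> b" and b: "b > 0" and X: "\<And>m. X m \<ge> 0"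
  shows "eventually (\<lambda>m. 0 \<le> X m/(X m+Y m) \<and> X m/(X m+Y m) \<le> 2 * X m / (b * real m)) sequentially"
proof -
  have ev2: "eventually (\<lambda>m. Y m / real m > b/2) sequentially"
    using YB b by (intro order_tendstoD) auto
  then show ?thesis
  proof eventually_elim
    case (elim m)
    have mz: "real m > 0" using elim b by (cases "m = 0") auto
    have Y: "Y m > b/2 * real m" using elim mz by (simp add: field_simps)
    have bm: "b/2 * real m > 0" using mz b by simp
    have Yp: "Y m > 0" using Y bm by linarith
    have "X m/(X m+Y m) \<le> X m / (b/2 * real m)"
    proof (rule divide_left_mono)
      show "b/2 * real m \<le> X m + Y m" using X[of m] Y by linarith
      show "0 \<le> X m" by (rule X)
      show "0 < (X m + Y m) * (b / 2 * real m)" by (rule mult_pos_pos[OF _ bm]) (use X[of m] Yp in linarith)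
    qed
    also have "\<dots> = 2 * X m / (b * real m)" by simp
    finally show ?case using X[of m] Yp b mz by simp
  qed
qed

theorem theoremA1:
  fixes M :: "'a measure"
    and Estar :: "nat \<Rightarrow> 'a \<Rightarrow> real"
    and E :: "nat \<Rightarrow> 'a \<Rightarrow> real"
    and nstar :: "nat \<Rightarrow> nat"
    and \<mu> :: real
  assumes "prob_space M"
    and "\<And>i. Estar i \<in> borel_measurable M"
    and "\<And>j. E j \<in> borel_measurable M"
    and mu_pos: "0 < \<mu>"
    and Y_lim: "AE \<omega> in M. (\<lambda>m. Ysum (\<lambda>j. E j \<omega>) m / real m) \<longlonglongrightarrow> \<mu>"
  shows
    "(\<forall>\<mu>s::real. 0 < \<mu>s
        \<and> (AE \<omega> in M. (\<lambda>m. Xsum (\<lambda>i. Estar i \<omega>) (nstar m) / real (nstar m)) \<longlonglongrightarrow> \<mu>s)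
        \<and> (\<lambda>m::nat. \<mu>s / \<mu>) \<in> O(\<lambda>m. 1)
      \<longrightarrow>
        (AE \<omega> in M. (\<lambda>m. primary_mass (\<lambda>i. Estar i \<omega>) (\<lambda>j. E j \<omega>) (nstar m) m
              - real (nstar m) * \<mu>s / (real (nstar m) * \<mu>s + real m * \<mu>)) \<longlonglongrightarrow> 0)
      \<and> (filterlim (\<lambda>m. real m / real (nstar m)) at_top sequentially \<longrightarrow>
           (AE \<omega> in M. (\<lambda>m. primary_mass (\<lambda>i. Estar i \<omega>) (\<lambda>j. E j \<omega>) (nstar m) m) \<longlonglongrightarrow> 0)
         \<and> (AE \<omega> in M. (\<lambda>m. primary_mass (\<lambda>i. Estar i \<omega>) (\<lambda>j. E j \<omega>) (nstar m) m)
                \<in> O(\<lambda>m. real (nstar m) / real m))))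
   \<and> (\<forall>N::nat. (\<forall>m. nstar m = N) \<longrightarrow>
        (AE \<omega> in M. (\<lambda>m. primary_mass (\<lambda>i. Estar i \<omega>) (\<lambda>j. E j \<omega>) N m) \<longlonglongrightarrow> 0)
      \<and> (AE \<omega> in M. (\<lambda>m. primary_mass (\<lambda>i. Estar i \<omega>) (\<lambda>j. E j \<omega>) N m)
             \<in> O(\<lambda>m. 1 / real m)))"
proof (intro conjI allI impI)
  have Xnn': "\<And>\<omega> k. Xsum (\<lambda>i. Estar i \<omega>) k \<ge> 0" by (rule Xnn)
  have invm: "(\<lambda>m. inverse (real m)) \<longlonglongrightarrow> 0"
    by (rule tendsto_inverse_0_at_top[OF filterlim_real_sequentially])
  fix \<mu>s :: real
  assume H: "0 < \<mu>s
        \<and> (AE \<omega> in M. (\<lambda>m. Xsum (\<lambda>i. Estar i \<omega>) (nstar m) / real (nstar m)) \<longlonglongrightarrow> \<mu>s)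
        \<and> (\<lambda>m::nat. \<mu>s / \<mu>) \<in> O(\<lambda>m. 1)"
  then have mus: "0 < \<mu>s"
    and XA: "AE \<omega> in M. (\<lambda>m. Xsum (\<lambda>i. Estar i \<omega>) (nstar m) / real (nstar m)) \<longlonglongrightarrow> \<mu>s"
    by auto
  show D: "AE \<omega> in M. (\<lambda>m. primary_mass (\<lambda>i. Estar i \<omega>) (\<lambda>j. E j \<omega>) (nstar m) m
              - real (nstar m) * \<mu>s / (real (nstar m) * \<mu>s + real m * \<mu>)) \<longlonglongrightarrow> 0"
    using XA Y_lim
  proof eventually_elim
    case (elim \<omega>)
    show ?case unfolding pm_eq by (rule detA[OF elim(1) elim(2) mus mu_pos])
  qed
  {
    assume lim: "filterlim (\<lambda>m. real m / real (nstar m)) at_top sequentially"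
    have T: "(\<lambda>m. real (nstar m) * \<mu>s / (real (nstar m) * \<mu>s + real m * \<mu>)) \<longlonglongrightarrow> 0"
    proof (rule Lim_null_comparison)
      show "(\<lambda>m. \<mu>s / \<mu> * inverse (real m / real (nstar m))) \<longlonglongrightarrow> 0"
        by (rule tendsto_mult_right_zero[OF tendsto_inverse_0_at_top[OF lim]])
      have "eventually (\<lambda>m. real m / real (nstar m) > 1) sequentially"
        using lim by (simp add: filterlim_at_top_dense)
      then show "eventually (\<lambda>m. norm (real (nstar m) * \<mu>s / (real (nstar m) * \<mu>s + real m * \<mu>))
          \<le> \<mu>s / \<mu> * inverse (real m / real (nstar m))) sequentially"
      proof eventually_elim
        case (elim m)
        have nz: "real (nstar m) > 0" using elim by (cases "nstar m = 0") auto
        have mz: "real m > 0" using elim by (cases "m = 0") auto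
        have p1: "real m * \<mu> > 0" using mz mu_pos by simp
        have p0: "real (nstar m) * \<mu>s > 0" using nz mus by simp
        have "norm (real (nstar m) * \<mu>s / (real (nstar m) * \<mu>s + real m * \<mu>))
            = real (nstar m) * \<mu>s / (real (nstar m) * \<mu>s + real m * \<mu>)"
          using p0 p1 by simp
        also have "\<dots> \<le> real (nstar m) * \<mu>s / (real m * \<mu>)"
          using p0 p1 by (intro divide_left_mono) auto
        also have "\<dots> = \<mu>s / \<mu> * inverse (real m / real (nstar m))"
          using nz mz mu_pos by (simp add: field_simps)
        finally show ?case .
      qed
    qed
    show "AE \<omega> in M. (\<lambda>m. primary_mass (\<lambda>i. Estar i \<omega>) (\<lambda>j. E j \<omega>) (nstar m) m) \<longlonglongrightarrow> 0"
      using D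
    proof eventually_elim
      case (elim \<omega>)
      from tendsto_add[OF elim T] show ?case by simp
    qed
    show "AE \<omega> in M. (\<lambda>m. primary_mass (\<lambda>i. Estar i \<omega>) (\<lambda>j. E j \<omega>) (nstar m) m)
                \<in> O(\<lambda>m. real (nstar m) / real m)"
      using XA Y_lim
    proof eventually_elim
      case (elim \<omega>)
      have e1: "eventually (\<lambda>m. Xsum (\<lambda>i. Estar i \<omega>) (nstar m) / real (nstar m) < 2 * \<mu>s) sequentially"
        using elim(1) mus by (intro order_tendstoD) auto
      note e2 = detO[where X="\<lambda>m. Xsum (\<lambda>i. Estar i \<omega>) (nstar m)", OF elim(2) mu_pos Xnn]
      show ?case
      proof (rule bigoI[where c = "4 * \<mu>s / \<mu>"])
        show "eventually (\<lambda>m. norm (primary_mass (\<lambda>i. Estar i \<omega>) (\<lambda>j. E j \<omega>) (nstar m) m)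
          \<le> 4 * \<mu>s / \<mu> * norm (real (nstar m) / real m)) sequentially"
          using e1 e2
        proof eventually_elim
          case (elim m)
          let ?X = "Xsum (\<lambda>i. Estar i \<omega>) (nstar m)"
          have Xle: "?X \<le> 2 * \<mu>s * real (nstar m)"
          proof (cases "nstar m = 0")
            case True then show ?thesis by (simp add: Xsum_def)
          next
            case False then show ?thesis using elim(1) by (simp add: field_simps)
          qed
          have "norm (primary_mass (\<lambda>i. Estar i \<omega>) (\<lambda>j. E j \<omega>) (nstar m) m)
             \<le> 2 * ?X / (\<mu> * real m)" using elim(2) unfolding pm_eq real_norm_def by (metis abs_of_nonneg)
          also have "\<dots> \<le> 2 * (2 * \<mu>s * real (nstar m)) / (\<mu> * real m)"
            using Xle mu_pos by (intro divide_right_mono) auto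
          also have "\<dots> = 4 * \<mu>s / \<mu> * norm (real (nstar m) / real m)"
            by (simp add: field_simps)
          finally show ?case .
        qed
      qed
    qed
  }
next
  have invm: "(\<lambda>m. inverse (real m)) \<longlonglongrightarrow> 0"
    by (rule tendsto_inverse_0_at_top[OF filterlim_real_sequentially])
  fix N :: nat
  {
    fix \<omega>
    assume YB: "(\<lambda>m. Ysum (\<lambda>j. E j \<omega>) m / real m) \<longlonglongrightarrow> \<mu>"
    let ?X = "Xsum (\<lambda>i. Estar i \<omega>) N"
    have ev: "eventually (\<lambda>m. norm (primary_mass (\<lambda>i. Estar i \<omega>) (\<lambda>j. E j \<omega>) N m)
        \<le> 2 * ?X / \<mu> * norm (1 / real m)) sequentially"
      using detO[where X="\<lambda>m. ?X", OF YB mu_pos Xnn]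
    proof eventually_elim
      case (elim m)
      have "2 * ?X / (\<mu> * real m) = 2 * ?X / \<mu> * norm (1 / real m)" by simp
      then show ?case using elim unfolding pm_eq real_norm_def by (metis abs_of_nonneg)
    qed
    have "(\<lambda>m. primary_mass (\<lambda>i. Estar i \<omega>) (\<lambda>j. E j \<omega>) N m) \<longlonglongrightarrow> 0"
    proof (rule Lim_null_comparison[OF ev])
      show "(\<lambda>m. 2 * ?X / \<mu> * norm (1 / real m)) \<longlonglongrightarrow> 0"
        using tendsto_mult_right_zero[OF invm, of "2 * ?X / \<mu>"] by (simp add: divide_inverse)
    qed
    moreover have "(\<lambda>m. primary_mass (\<lambda>i. Estar i \<omega>) (\<lambda>j. E j \<omega>) N m) \<in> O(\<lambda>m. 1 / real m)"
      by (rule bigoI[OF ev])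
    ultimately have "((\<lambda>m. primary_mass (\<lambda>i. Estar i \<omega>) (\<lambda>j. E j \<omega>) N m) \<longlonglongrightarrow> 0)
       \<and> (\<lambda>m. primary_mass (\<lambda>i. Estar i \<omega>) (\<lambda>j. E j \<omega>) N m) \<in> O(\<lambda>m. 1 / real m)" ..
  } note R = this
  show "AE \<omega> in M. (\<lambda>m. primary_mass (\<lambda>i. Estar i \<omega>) (\<lambda>j. E j \<omega>) N m) \<longlonglongrightarrow> 0"
    using Y_lim by eventually_elim (use R in blast)
  show "AE \<omega> in M. (\<lambda>m. primary_mass (\<lambda>i. Estar i \<omega>) (\<lambda>j. E j \<omega>) N m) \<in> O(\<lambda>m. 1 / real m)"
    using Y_lim by eventually_elim (use R in blast)
qed

end
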